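(* Let $p\geq 5$ be a prime and let $r$ be an integer with $1\leq r\leq p-1$ such that $3r+1$ is a quadratic nonresidue modulo $p$. Then for all $n\geq 0$, $d_7(2pn+2r+1)\equiv 0\pmod 4$.
   Context: For each integer $k\geq 1$, the numbers $d_k(n)$ are defined by $\sum_{n\geq 0} d_k(n)q^n = \frac{f_2^k}{f_1^{3k+1}}$, where $f_r = \prod_{i\geq 1}(1-q^{ri})$. *)

theory Defs
  imports "HOL-Computational_Algebra.Computational_Algebra" "HOL-Number_Theory.Number_Theory"
begin

text \<open>f_r = prod_{i>=1} (1 - q^(r i)) as a formal power series over the rationals.
  The coefficient of q^n is determined by the finite product over i = 1..n
  (factors with i > n only affect degrees > n when r >= 1).\<close>
definition f_fps :: "nat \<Rightarrow> rat fps" where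
  "f_fps r = Abs_fps (\<lambda>n. fps_nth (\<Prod>i\<in>{1..n}. (1 - fps_X ^ (r * i))) n)"

definition d :: "nat \<Rightarrow> nat \<Rightarrow> rat" where
  "d k n = fps_nth (f_fps 2 ^ k * inverse (f_fps 1 ^ (3 * k + 1))) n"

end

theory Submission
  imports Defs
begin
abbreviation X :: "rat fps" where "X \<equiv> fps_X"

definition eqt :: "nat \<Rightarrow> rat fps \<Rightarrow> rat fps \<Rightarrow> bool" where
  "eqt N A B \<longleftrightarrow> (\<forall>i\<le>N. A $ i = B $ i)"

lemma eqt_refl[simp]: "eqt N A A" by (simp add: eqt_def)
lemma eqt_sym: "eqt N A B \<Longrightarrow> eqt N B A" by (simp add: eqt_def)
lemma eqt_trans: "eqt N A B \<Longrightarrow> eqt N B C \<Longrightarrow> eqt N A C" by (simp add: eqt_def)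
lemma eqt_mono: "eqt N A B \<Longrightarrow> M \<le> N \<Longrightarrow> eqt M A B" by (simp add: eqt_def)
lemma eqt_add: "eqt N A B \<Longrightarrow> eqt N C D \<Longrightarrow> eqt N (A + C) (B + D)" by (simp add: eqt_def)
lemma eqt_diff: "eqt N A B \<Longrightarrow> eqt N C D \<Longrightarrow> eqt N (A - C) (B - D)" by (simp add: eqt_def)
lemma eqt_uminus: "eqt N A B \<Longrightarrow> eqt N (- A) (- B)" by (simp add: eqt_def)
lemma eqt_diff0: "eqt N A B \<longleftrightarrow> eqt N (A - B) 0" by (simp add: eqt_def)

lemma eqt_mult: assumes "eqt N A B" "eqt N C D" shows "eqt N (A * C) (B * D)"
  unfolding eqt_def
proof (intro allI impI)
  fix i assume i: "i \<le> N"
  show "(A*C)$i = (B*D)$i" unfolding fps_mult_nth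
    by (rule sum.cong) (use assms i in \<open>auto simp: eqt_def\<close>)
qed

lemma eqt_power: "eqt N A B \<Longrightarrow> eqt N (A^m) (B^m)"
  by (induct m) (auto intro: eqt_mult)

lemma eqt_prod: "(\<And>i. i \<in> S \<Longrightarrow> eqt N (f i) (g i)) \<Longrightarrow> eqt N (prod f S) (prod g S)"
  by (induct S rule: infinite_finite_induct) (auto intro: eqt_mult)

lemma eqt_sum: "(\<And>i. i \<in> S \<Longrightarrow> eqt N (f i) (g i)) \<Longrightarrow> eqt N (sum f S) (sum g S)"
  by (induct S rule: infinite_finite_induct) (auto intro: eqt_add)

lemma eqt_shift: "eqt M A B \<Longrightarrow> eqt (M + e) (X^e * A) (X^e * B)"
  by (auto simp: eqt_def fps_X_power_mult_nth)

lemma eqt_inverse: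
  assumes "eqt N A B" "A$0 \<noteq> 0" shows "eqt N (inverse A) (inverse B)"
proof -
  have B0: "B$0 = A$0" using assms by (auto simp: eqt_def)
  have e: "inverse A - inverse B = inverse A * (B - A) * inverse B"
  proof -
    have "inverse A * (B - A) * inverse B = inverse A * (B * inverse B) - (inverse A * A) * inverse B"
      by (simp add: algebra_simps)
    also have "\<dots> = inverse A - inverse B"
      using B0 assms(2) by (simp add: inverse_mult_eq_1 inverse_mult_eq_1')
    finally show ?thesis by simp
  qed
  have "eqt N (B - A) 0" using assms(1) eqt_diff0 eqt_sym by blast
  hence "eqt N (inverse A * (B - A) * inverse B) (inverse A * 0 * inverse B)"
    by (intro eqt_mult eqt_refl)
  hence "eqt N (inverse A - inverse B) 0" using e by simp
  thus ?thesis using eqt_diff0 by blast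
qed

lemma eqt_one_plus: "(\<And>i. i \<le> M \<Longrightarrow> E $ i = 0) \<Longrightarrow> eqt M (1 + E) 1"
  by (auto simp: eqt_def)

lemma eqt_one_minus: "(\<And>i. i \<le> M \<Longrightarrow> E $ i = 0) \<Longrightarrow> eqt M (1 - E) 1"
  by (auto simp: eqt_def)

lemma eqt_prod_one: "(\<And>i. i \<in> S \<Longrightarrow> eqt N (f i) 1) \<Longrightarrow> eqt N (prod f S) 1"
  using eqt_prod[of S N f "\<lambda>_. 1"] by simp

definition intg :: "nat \<Rightarrow> rat fps \<Rightarrow> bool" where
  "intg N A \<longleftrightarrow> (\<forall>i\<le>N. A $ i \<in> \<int>)"

definition mz :: "nat \<Rightarrow> int \<Rightarrow> rat fps \<Rightarrow> bool" where
  "mz N k E \<longleftrightarrow> (\<forall>i\<le>N. \<exists>w\<in>\<int>. E $ i = of_int k * w)"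

definition cg :: "nat \<Rightarrow> int \<Rightarrow> rat fps \<Rightarrow> rat fps \<Rightarrow> bool" where
  "cg N k A B \<longleftrightarrow> mz N k (A - B)"

lemma intg_0[simp]: "intg N 0" by (simp add: intg_def)
lemma intg_1[simp]: "intg N 1" by (simp add: intg_def)
lemma intg_Xp[simp]: "intg N (X^e)" by (simp add: intg_def)
lemma intg_X[simp]: "intg N X" by (simp add: intg_def fps_X_nth)
lemma intg_const: "c \<in> \<int> \<Longrightarrow> intg N (fps_const c)" by (simp add: intg_def)
lemma intg_add[intro]: "intg N A \<Longrightarrow> intg N B \<Longrightarrow> intg N (A + B)" by (simp add: intg_def)
lemma intg_diff[intro]: "intg N A \<Longrightarrow> intg N B \<Longrightarrow> intg N (A - B)" by (simp add: intg_def)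
lemma intg_uminus[intro]: "intg N A \<Longrightarrow> intg N (- A)" by (simp add: intg_def)
lemma intg_mult[intro]: assumes "intg N A" "intg N B" shows "intg N (A * B)"
  unfolding intg_def
proof (intro allI impI)
  fix i assume "i \<le> N"
  thus "(A*B)$i \<in> \<int>" unfolding fps_mult_nth
    using assms by (intro Ints_sum Ints_mult) (auto simp: intg_def)
qed
lemma intg_power[intro]: "intg N A \<Longrightarrow> intg N (A ^ m)" by (induct m) auto
lemma intg_prod[intro]: "(\<And>i. i \<in> S \<Longrightarrow> intg N (f i)) \<Longrightarrow> intg N (prod f S)"
  by (induct S rule: infinite_finite_induct) auto
lemma intg_sum[intro]: "(\<And>i. i \<in> S \<Longrightarrow> intg N (f i)) \<Longrightarrow> intg N (sum f S)"
  by (induct S rule: infinite_finite_induct) auto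
lemma intg_numeral[simp]: "intg N (numeral k)"
  by (simp add: intg_def fps_numeral_nth)

lemma intg_inverse:
  assumes "intg N A" "A $ 0 = 1" shows "intg N (inverse A)"
  unfolding intg_def
proof (intro allI impI)
  fix i assume "i \<le> N"
  thus "inverse A $ i \<in> \<int>"
  proof (induct i rule: less_induct)
    case (less i)
    show ?case
    proof (cases i)
      case 0 thus ?thesis using assms by simp
    next
      case (Suc j)
      have "(A * inverse A) $ i = 0" using assms Suc by (simp add: inverse_mult_eq_1')
      hence "(\<Sum>t=0..i. A$t * inverse A $ (i - t)) = 0" by (simp add: fps_mult_nth)
      hence "inverse A $ i + (\<Sum>t=Suc 0..i. A$t * inverse A $ (i - t)) = 0"
        using assms by (simp add: sum.atLeast_Suc_atMost)
      hence "inverse A $ i = - (\<Sum>t=Suc 0..i. A$t * inverse A $ (i - t))" by (simp add: eq_neg_iff_add_eq_0)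
      moreover have "(\<Sum>t=Suc 0..i. A$t * inverse A $ (i - t)) \<in> \<int>"
        using assms(1) less by (intro Ints_sum Ints_mult) (auto simp: intg_def)
      ultimately show ?thesis by simp
    qed
  qed
qed

lemma mz_0[simp]: "mz N k 0" by (auto simp: mz_def intro: bexI[of _ 0])
lemma mz_add[intro]: assumes "mz N k A" "mz N k B" shows "mz N k (A + B)"
  unfolding mz_def
proof (intro allI impI)
  fix i assume "i \<le> N"
  then obtain u v where "u \<in> \<int>" "v \<in> \<int>" "A$i = of_int k * u" "B$i = of_int k * v"
    using assms by (meson mz_def)
  thus "\<exists>w\<in>\<int>. (A + B) $ i = of_int k * w" by (intro bexI[of _ "u+v"]) (auto simp: algebra_simps)
qed
lemma mz_uminus[intro]: assumes "mz N k A" shows "mz N k (- A)"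
  unfolding mz_def
proof (intro allI impI)
  fix i assume "i \<le> N"
  then obtain u where "u \<in> \<int>" "A$i = of_int k * u"
    using assms by (meson mz_def)
  thus "\<exists>w\<in>\<int>. (- A) $ i = of_int k * w" by (intro bexI[of _ "-u"]) auto
qed
lemma mz_diff[intro]: "mz N k A \<Longrightarrow> mz N k B \<Longrightarrow> mz N k (A - B)"
  using mz_add[of N k A "-B"] mz_uminus[of N k B] by simp
lemma mz_mult_left[intro]: assumes "intg N C" "mz N k E" shows "mz N k (C * E)"
  unfolding mz_def
proof (intro allI impI)
  fix i assume i: "i \<le> N"
  have "\<forall>j. \<exists>w. j \<le> N \<longrightarrow> w \<in> \<int> \<and> E$j = of_int k * w" using assms(2) by (meson mz_def)
  then obtain w where w: "\<And>j. j \<le> N \<Longrightarrow> w j \<in> \<int> \<and> E$j = of_int k * w j" by metis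
  have "(C*E)$i = (\<Sum>t=0..i. C$t * (of_int k * w (i - t)))"
    unfolding fps_mult_nth using w i by (intro sum.cong) auto
  also have "\<dots> = of_int k * (\<Sum>t=0..i. C$t * w (i - t))"
    by (simp add: sum_distrib_left algebra_simps)
  finally show "\<exists>w\<in>\<int>. (C * E) $ i = of_int k * w"
    using assms(1) i w by (intro bexI[of _ "\<Sum>t=0..i. C$t * w (i - t)"] Ints_sum Ints_mult) (auto simp: intg_def)
qed
lemma mz_mult_right[intro]: "intg N C \<Longrightarrow> mz N k E \<Longrightarrow> mz N k (E * C)"
  using mz_mult_left[of N C k E] by (simp add: mult.commute)
lemma mz_of_eqt: "eqt N E 0 \<Longrightarrow> mz N k E"
  by (auto simp: mz_def eqt_def intro: bexI[of _ 0])
lemma mz_const: "intg N C \<Longrightarrow> mz N k (fps_const (of_int k) * C)"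
  by (auto simp: mz_def intg_def)
lemma mz_dvd: assumes "mz N k E" shows "mz N (c * k) (fps_const (of_int c) * E)"
  unfolding mz_def
proof (intro allI impI)
  fix i assume "i \<le> N"
  then obtain u where "u \<in> \<int>" "E$i = of_int k * u"
    using assms by (meson mz_def)
  thus "\<exists>w\<in>\<int>. (fps_const (of_int c) * E) $ i = of_int (c * k) * w" by (intro bexI[of _ "u"]) auto
qed

lemma cg_refl[simp]: "cg N k A A" by (simp add: cg_def)
lemma cg_sym: "cg N k A B \<Longrightarrow> cg N k B A"
  unfolding cg_def using mz_uminus[of N k "A - B"] by simp
lemma cg_trans: "cg N k A B \<Longrightarrow> cg N k B C \<Longrightarrow> cg N k A C"
  unfolding cg_def using mz_add[of N k "A - B" "B - C"] by simp
lemma cg_add: "cg N k A B \<Longrightarrow> cg N k C D \<Longrightarrow> cg N k (A + C) (B + D)"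
proof -
  have "A + C - (B + D) = (A - B) + (C - D)" by simp
  thus "cg N k A B \<Longrightarrow> cg N k C D \<Longrightarrow> cg N k (A + C) (B + D)" unfolding cg_def using mz_add by metis
qed
lemma cg_mult: assumes "cg N k A B" "cg N k C D" "intg N A" "intg N D"
  shows "cg N k (A * C) (B * D)"
proof -
  have "A * C - B * D = A * (C - D) + (A - B) * D" by (simp add: algebra_simps)
  moreover have "mz N k (A * (C - D))" using assms unfolding cg_def by blast
  moreover have "mz N k ((A - B) * D)" using assms unfolding cg_def by blast
  ultimately show ?thesis unfolding cg_def by (metis mz_add)
qed
lemma cg_power: assumes "cg N k A B" "intg N A" "intg N B" shows "cg N k (A ^ m) (B ^ m)"
  by (induct m) (use assms in \<open>auto intro!: cg_mult\<close>)
lemma cg_prod: "(\<And>i. i \<in> S \<Longrightarrow> cg N k (f i) (g i) \<and> intg N (f i) \<and> intg N (g i)) \<Longrightarrow> cg N k (prod f S) (prod g S)"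
  by (induct S rule: infinite_finite_induct) (auto intro!: cg_mult)
lemma cg_of_eqt: "eqt N A B \<Longrightarrow> cg N k A B"
  unfolding cg_def by (rule mz_of_eqt) (simp add: eqt_def)
lemma cg_lmult: "cg N k A B \<Longrightarrow> intg N C \<Longrightarrow> cg N k (C * A) (C * B)"
  unfolding cg_def using mz_mult_left[of N C k "A - B"] by (simp add: right_diff_distrib)
lemma cg_decomp: "A = B + fps_const (of_int k) * C \<Longrightarrow> intg N C \<Longrightarrow> cg N k A B"
  unfolding cg_def by (simp add: mz_const)
lemma cg_scale: "cg N k A B \<Longrightarrow> cg N (c * k) (fps_const (of_int c) * A) (fps_const (of_int c) * B)"
  unfolding cg_def using mz_dvd[of N k "A - B" c] by (simp add: right_diff_distrib)
lemma cg_nth: "cg N k A B \<Longrightarrow> i \<le> N \<Longrightarrow> \<exists>w\<in>\<int>. A $ i = B $ i + of_int k * w"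
  unfolding cg_def mz_def by (force simp: algebra_simps)

fun gb :: "'a::comm_ring_1 \<Rightarrow> nat \<Rightarrow> nat \<Rightarrow> 'a" where
  "gb x 0 k = (if k = 0 then 1 else 0)"
| "gb x (Suc N) k = x^k * gb x N k + (if k = 0 then 0 else gb x N (k - 1))"

fun tri :: "nat \<Rightarrow> nat" where
  "tri 0 = 0" | "tri (Suc k) = tri k + k"

lemma gb_zero: "N < k \<Longrightarrow> gb x N k = 0"
  by (induct N arbitrary: k) auto

lemma gb_N0[simp]: "gb x N 0 = 1"
  by (induct N) auto

lemma gb_NN[simp]: "gb x N N = 1"
  by (induct N) (auto simp: gb_zero)

lemma qbin:
  fixes x y w :: "'a::comm_ring_1"
  shows "(\<Prod>i<N. w + y * x^i) = (\<Sum>k\<le>N. gb x N k * x^(tri k) * y^k * w^(N-k))"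
proof (induct N arbitrary: y)
  case 0 thus ?case by simp
next
  case (Suc N)
  let ?S = "\<Sum>k\<le>N. gb x N k * x^(tri k) * (y*x)^k * w^(N-k)"
  have "(\<Prod>i<Suc N. w + y * x^i) = (w + y) * (\<Prod>i<N. w + (y*x) * x^i)"
    by (subst prod.lessThan_Suc_shift) (simp add: mult_ac)
  also have "\<dots> = (w + y) * ?S" using Suc[of "y*x"] by simp
  finally have L: "(\<Prod>i<Suc N. w + y * x^i) = w * ?S + y * ?S" by (simp add: algebra_simps)
  have A: "(\<Sum>k\<le>Suc N. x^k * gb x N k * x^(tri k) * y^k * w^(Suc N-k)) = w * ?S"
  proof -
    have "(\<Sum>k\<le>Suc N. x^k * gb x N k * x^(tri k) * y^k * w^(Suc N-k))
        = (\<Sum>k\<le>N. x^k * gb x N k * x^(tri k) * y^k * w^(Suc N-k))"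
      by (simp add: gb_zero)
    also have "\<dots> = (\<Sum>k\<le>N. w * (gb x N k * x^(tri k) * (y*x)^k * w^(N-k)))"
    proof (rule sum.cong)
      fix k assume "k \<in> {..N}"
      hence "Suc N - k = Suc (N - k)" by auto
      thus "x^k * gb x N k * x^(tri k) * y^k * w^(Suc N-k) = w * (gb x N k * x^(tri k) * (y*x)^k * w^(N-k))"
        by (simp add: power_mult_distrib algebra_simps)
    qed simp
    finally show ?thesis by (simp add: sum_distrib_left)
  qed
  have B: "(\<Sum>k\<le>Suc N. (if k = 0 then 0 else gb x N (k - 1)) * x^(tri k) * y^k * w^(Suc N-k)) = y * ?S"
  proof -
    have "(\<Sum>k\<le>Suc N. (if k = 0 then 0 else gb x N (k - 1)) * x^(tri k) * y^k * w^(Suc N-k))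
       = (\<Sum>k\<le>N. gb x N k * x^(tri (Suc k)) * y^(Suc k) * w^(Suc N - Suc k))"
      by (subst sum.atMost_Suc_shift) (simp del: tri.simps)
    also have "\<dots> = (\<Sum>k\<le>N. y * (gb x N k * x^(tri k) * (y*x)^k * w^(N-k)))"
      by (intro sum.cong) (simp_all add: power_add power_mult_distrib algebra_simps)
    finally show ?thesis by (simp add: sum_distrib_left)
  qed
  have "(\<Sum>k\<le>Suc N. gb x (Suc N) k * x^(tri k) * y^k * w^(Suc N-k))
      = (\<Sum>k\<le>Suc N. x^k * gb x N k * x^(tri k) * y^k * w^(Suc N-k))
      + (\<Sum>k\<le>Suc N. (if k = 0 then 0 else gb x N (k - 1)) * x^(tri k) * y^k * w^(Suc N-k))"
    by (simp add: sum.distrib[symmetric] algebra_simps del: tri.simps)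
  thus ?case using L A B by simp
qed

definition qp :: "'a::comm_ring_1 \<Rightarrow> nat \<Rightarrow> 'a" where
  "qp x n = (\<Prod>i<n. 1 - x^(Suc i))"

lemma qp_0[simp]: "qp x 0 = 1" by (simp add: qp_def)
lemma qp_Suc: "qp x (Suc n) = qp x n * (1 - x^(Suc n))" by (simp add: qp_def)

lemma gb_qp: "k \<le> N \<Longrightarrow> gb x N k * qp x k * qp x (N - k) = qp x N"
proof (induct N arbitrary: k)
  case 0 thus ?case by simp
next
  case (Suc N)
  show ?case
  proof (cases k)
    case 0 thus ?thesis by simp
  next
    case (Suc j)
    show ?thesis
    proof (cases "j = N")
      case True thus ?thesis using Suc by simp
    next
      case False
      with Suc \<open>k \<le> Suc N\<close> have jN: "j < N" by auto
      then obtain m where m: "N - j = Suc m" by (metis Suc_diff_Suc)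
      have m2: "N - Suc j = m" using m by auto
      have IH1: "gb x N (Suc j) * qp x (Suc j) * qp x m = qp x N" using Suc.hyps[of "Suc j"] jN m2 by simp
      have IH2: "gb x N j * qp x j * qp x (Suc m) = qp x N" using Suc.hyps[of j] jN m by simp
      have e: "Suc N - k = Suc m" using Suc m by simp
      have sm: "Suc j + Suc m = Suc N" using m jN by arith
      have xx: "x^(Suc j) * x^(Suc m) = x^(Suc N)" by (simp only: power_add[symmetric] sm)
      have "gb x (Suc N) k * qp x k * qp x (Suc N - k)
          = (x^(Suc j) * gb x N (Suc j) + gb x N j) * qp x (Suc j) * qp x (Suc m)"
        using Suc e by simp
      also have "\<dots> = x^(Suc j) * (1 - x^(Suc m)) * (gb x N (Suc j) * qp x (Suc j) * qp x m)
                     + (1 - x^(Suc j)) * (gb x N j * qp x j * qp x (Suc m))"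
        by (simp add: qp_Suc[of x m] qp_Suc[of x j] algebra_simps)
      also have "\<dots> = qp x N * (1 - x^(Suc j) * x^(Suc m))"
        using IH1 IH2 by (simp add: algebra_simps)
      also have "\<dots> = qp x (Suc N)" using xx by (simp add: qp_Suc)
      finally show ?thesis .
    qed
  qed
qed

lemma prod_split_add: "(\<Prod>i<n+m. f i) = (\<Prod>i<n. f i) * (\<Prod>i<m. f (n+i))"
  for f :: "nat \<Rightarrow> 'a::comm_monoid_mult"
  by (induct m) (simp_all add: mult_ac)

lemma sum_tri: "(\<Sum>i<n. i) = tri n"
  by (induct n) auto

lemma tri_add: "tri (n + s) = tri n + tri s + n * s"
  by (induct s) (auto simp: algebra_simps)

lemma tri2: "2 * tri k = k * (k - 1)"
  by (induct k) (auto simp: algebra_simps)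

lemma tri_ge: "s \<le> tri s + 1"
  by (induct s) auto

definition ee :: "nat \<Rightarrow> nat \<Rightarrow> nat \<Rightarrow> nat \<Rightarrow> nat" where
  "ee a b n k = (if n \<le> k then a * tri (k - n) + b * (k - n) else a * tri (n - k) + (a - b) * (n - k))"

lemma ee_exp:
  assumes "b \<le> a" "1 \<le> n" "k \<le> 2*n"
  shows "a * tri k + (a*n - b) * (2*n - k) = (a * tri n + (a*n - b) * n) + ee a b n k"
proof (cases "n \<le> k")
  case True
  define s where "s = k - n"
  have k: "k = n + s" using True s_def by simp
  have t: "2*n - k + s = n" using assms(3) k by simp
  have bn: "b \<le> a * n" using assms(1,2) by (metis le_trans mult_le_mono2 mult_1_right)
  obtain c where c: "a * n = c + b" using bn le_Suc_ex by (metis add.commute le_add_diff_inverse)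
  have cc: "a*n - b = c" using c by simp
  have "a * tri k + c * (2*n - k) + c * s = a * tri n + c * n + a * tri s + b * s + c * s"
  proof -
    have e1: "a * tri k = a*tri n + a*tri s + (a*n)*s" by (simp add: k tri_add algebra_simps)
    have e2: "c*(2*n-k) + c*s = c*n" using t by (metis add_mult_distrib2)
    have e3: "(a*n)*s = c*s + b*s" using c by (simp add: add_mult_distrib)
    show ?thesis using e1 e2 e3 by linarith
  qed
  thus ?thesis using True by (simp add: ee_def cc s_def)
next
  case False
  define s where "s = n - k"
  have n: "n = k + s" using False s_def by simp
  have bn: "b \<le> a * n" using assms(1,2) by (metis le_trans mult_le_mono2 mult_1_right)
  have e2: "2*n - k = n + s" using n by simp
  have "int (a * tri k + (a*n - b) * (2*n - k)) = int (a * tri n + (a*n - b) * n + ee a b n k)"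
  proof -
    have i1: "int (a*n - b) = int a * int n - int b" using bn by (simp add: of_nat_diff)
    have i2: "int (a - b) = int a - int b" using assms(1) by (simp add: of_nat_diff)
    have i3: "2 * int (tri s) = int s * (int s - 1)"
    proof -
      have "int (2 * tri s) = int (s * (s - 1))" by (simp only: tri2)
      thus ?thesis by (cases s) (auto simp: algebra_simps)
    qed
    have tn: "tri n = tri k + tri s + k * s" using n tri_add by simp
    have "int (a * tri k + (a*n - b) * (2*n - k)) = int a * int (tri k) + (int a * int n - int b) * (int n + int s)"
      using e2 i1 by simp
    moreover have "int (a * tri n + (a*n - b) * n + ee a b n k)
        = int a * (int (tri k) + int (tri s) + int k * int s) + (int a * int n - int b) * int n
          + int a * int (tri s) + (int a - int b) * int s"
      using False i1 i2 by (simp add: ee_def s_def[symmetric] tn)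
    moreover have "int a * int (tri k) + (int a * int n - int b) * (int n + int s)
       = int a * (int (tri k) + int (tri s) + int k * int s) + (int a * int n - int b) * int n
          + int a * int (tri s) + (int a - int b) * int s"
    proof -
      have "int n = int k + int s" using n by simp
      moreover have i4: "int s * int s = int s + 2 * int (tri s)" using i3 by (simp add: algebra_simps)
      moreover have "int a * (int s * int s) = int a * int s + int a * (2 * int (tri s))"
        using i4 by (simp add: distrib_left)
      ultimately have "(int a * int n - int b) * int s = int a * (2 * int (tri s)) + int a * int k * int s + (int a - int b) * int s"
        by (simp add: algebra_simps)
      thus ?thesis by (simp add: algebra_simps)
    qed
    ultimately show ?thesis by simp
  qed
  thus ?thesis by linarith
qed

lemma ee_ge: assumes "1 \<le> a" shows "ee a b n k + 1 \<ge> (if n \<le> k then k - n else n - k)"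
proof -
  have "s \<le> a * tri s + 1" for s
  proof -
    have "tri s \<le> a * tri s" using assms by simp
    thus ?thesis using tri_ge[of s] by linarith
  qed
  note H = this
  show ?thesis
  proof (cases "n \<le> k")
    case True thus ?thesis using H[of "k - n"] by (simp add: ee_def)
  next
    case False thus ?thesis using H[of "n - k"] by (simp add: ee_def)
  qed
qed

definition qr :: "rat fps \<Rightarrow> nat \<Rightarrow> nat \<Rightarrow> rat fps" where
  "qr x l u = (\<Prod>i\<in>{l..<u}. 1 - x^(Suc i))"

lemma qp_split: "l \<le> u \<Longrightarrow> qp x u = qp x l * qr x l u"
  unfolding qp_def qr_def lessThan_atLeast0 by (simp add: prod.atLeastLessThan_concat)

lemma Xpow_nth_low: "j < c \<Longrightarrow> (X^c) $ j = 0" by simp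

lemma qr_eqt: assumes "1 \<le> a" "M \<le> l" shows "eqt M (qr (X^a) l u) 1"
  unfolding qr_def
proof (rule eqt_prod_one)
  fix i assume "i \<in> {l..<u}"
  moreover have "1 * Suc i \<le> a * Suc i" using assms(1) by (rule mult_le_mono1)
  ultimately have lt: "M < a * Suc i" using assms(2) by simp
  show "eqt M (1 - (X^a)^(Suc i)) 1"
  proof (rule eqt_one_minus)
    fix j assume "j \<le> M"
    thus "((X^a)^(Suc i)) $ j = 0" unfolding power_mult[symmetric] fps_X_power_nth using lt by simp
  qed
qed

lemma qp0: assumes "1 \<le> a" shows "(qp (X^a) n) $ 0 = 1"
proof (induct n)
  case 0 thus ?case by simp
next
  case (Suc n)
  have "((X^a)^(Suc n)) $ 0 = 0" using assms by (simp add: power_mult[symmetric])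
  thus ?case using Suc by (simp add: qp_Suc)
qed

lemma qp_nz: "1 \<le> a \<Longrightarrow> qp (X^a) n \<noteq> 0"
  using qp0[of a n] by auto

lemma prod_reflect: "(\<Prod>i<n. f (n - i)) = (\<Prod>i<n. f (Suc i))"
  for f :: "nat \<Rightarrow> 'a::comm_monoid_mult"
  by (rule prod.reindex_bij_witness[where i="\<lambda>i. n - Suc i" and j="\<lambda>i. n - Suc i"]) (auto simp: Suc_diff_Suc)

lemma jtp_fin:
  fixes \<epsilon> :: rat
  assumes a: "1 \<le> a" and b: "b \<le> a" and n: "1 \<le> n" and e: "\<epsilon>^2 = 1"
  shows "(\<Prod>i<n. 1 + fps_const \<epsilon> * X^(a*(n-i)-b)) * (\<Prod>i<n. 1 + fps_const \<epsilon> * X^(a*i+b))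
       = (\<Sum>k\<le>2*n. gb (X^a) (2*n) k * fps_const (\<epsilon>^(k+n)) * X^(ee a b n k))"
  (is "?D1 * ?D2 = ?S")
proof -
  define w where "w = (X::rat fps)^(a*n-b)"
  define y where "y = fps_const \<epsilon>"
  define x where "x = (X::rat fps)^a"
  define L where "L = a * tri n + (a*n - b) * n"
  have "a \<le> a * n" using n by simp
  hence bn: "b \<le> a * n" using b by linarith
  have Q: "(\<Prod>i<2*n. w + y * x^i) = (\<Sum>k\<le>2*n. gb x (2*n) k * x^(tri k) * y^k * w^(2*n-k))"
    by (rule qbin)
  have f1: "w + y * x^i = (fps_const \<epsilon> * X^(a*i)) * (1 + fps_const \<epsilon> * X^(a*(n-i)-b))" if "i < n" for i
  proof -
    have "1 \<le> n - i" using that by simp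
    hence "a * 1 \<le> a * (n - i)" by (rule mult_le_mono2)
    hence "a \<le> a * (n - i)" by simp
    hence ab: "b \<le> a * (n - i)" using b by linarith
    have "a*i + a*(n-i) = a*n" using that by (simp add: add_mult_distrib2[symmetric])
    hence s: "a*i + (a*(n-i)-b) = a*n - b" using ab by linarith
    have "(fps_const \<epsilon> * X^(a*i)) * (1 + fps_const \<epsilon> * X^(a*(n-i)-b))
        = fps_const \<epsilon> * X^(a*i) + fps_const (\<epsilon>^2) * X^(a*i + (a*(n-i)-b))"
      by (simp add: algebra_simps power_add power2_eq_square)
    also have "\<dots> = w + y * x^i" using e s by (simp add: w_def y_def x_def power_mult[symmetric] add.commute)
    finally show ?thesis by simp
  qed
  have f2: "w + y * x^(n+i) = X^(a*n-b) * (1 + fps_const \<epsilon> * X^(a*i+b))" for i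
  proof -
    have s: "a*n - b + (a*i+b) = a*(n+i)" using bn by (simp add: algebra_simps)
    have p: "X^(a*n-b) * X^(a*i+b) = (X::rat fps)^(a*(n+i))" by (simp only: power_add[symmetric] s)
    have "X^(a*n-b) * (1 + fps_const \<epsilon> * X^(a*i+b)) = X^(a*n-b) + fps_const \<epsilon> * (X^(a*n-b) * X^(a*i+b))"
      by (simp only: distrib_left mult_1_right mult.left_commute)
    also have "\<dots> = w + y * x^(n+i)" by (simp only: p w_def y_def x_def power_mult[symmetric])
    finally show ?thesis by simp
  qed
  have lhs: "(\<Prod>i<2*n. w + y * x^i) = X^L * fps_const (\<epsilon>^n) * (?D1 * ?D2)"
  proof -
    have "(\<Prod>i<2*n. w + y * x^i) = (\<Prod>i<n. w + y * x^i) * (\<Prod>i<n. w + y * x^(n+i))"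
      using prod_split_add[of "\<lambda>i. w + y * x^i" n n] by (simp add: mult_2)
    also have "(\<Prod>i<n. w + y * x^i) = (\<Prod>i<n. fps_const \<epsilon> * X^(a*i)) * ?D1"
      using f1 by (simp add: prod.distrib[symmetric])
    also have "(\<Prod>i<n. w + y * x^(n+i)) = (\<Prod>i<n. X^(a*n-b)) * ?D2"
      using f2 by (simp add: prod.distrib)
    also have "(\<Prod>i<n. fps_const \<epsilon> * X^(a*i)) = fps_const (\<epsilon>^n) * X^(a * tri n)"
    proof -
      have "(\<Prod>i<n. X^(a*i)) = (X::rat fps)^(\<Sum>i<n. a*i)" by (simp add: power_sum)
      also have "(\<Sum>i<n. a*i) = a * tri n" by (simp add: sum_distrib_left[symmetric] sum_tri)
      finally show ?thesis by (simp add: prod.distrib)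
    qed
    also have "(\<Prod>i<n. X^(a*n-b)) = (X::rat fps)^((a*n-b)*n)" by (simp add: power_mult)
    finally have H: "(\<Prod>i<2*n. w + y * x^i) = fps_const (\<epsilon>^n) * X^(a * tri n) * ?D1 * (X^((a*n-b)*n) * ?D2)" .
    have XL: "(X::rat fps)^L = X^(a*tri n) * X^((a*n-b)*n)" by (simp only: L_def power_add)
    show ?thesis unfolding H XL by (simp only: mult_ac)
  qed
  have rhs: "(\<Sum>k\<le>2*n. gb x (2*n) k * x^(tri k) * y^k * w^(2*n-k))
      = X^L * fps_const (\<epsilon>^n) * ?S"
  proof -
    have "gb x (2*n) k * x^(tri k) * y^k * w^(2*n-k)
        = X^L * fps_const (\<epsilon>^n) * (gb (X^a) (2*n) k * fps_const (\<epsilon>^(k+n)) * X^(ee a b n k))"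
      if "k \<in> {..2*n}" for k
    proof -
      have ex: "a * tri k + (a*n-b)*(2*n-k) = L + ee a b n k"
        using ee_exp[OF b n] that by (simp add: L_def)
      have xw: "x^(tri k) * w^(2*n-k) = X^L * X^(ee a b n k)"
        by (simp add: x_def w_def power_mult[symmetric] flip: power_add ex)
      have ee: "\<epsilon>^k = \<epsilon>^n * \<epsilon>^(k+n)"
      proof -
        have nn: "n + (k + n) = k + 2*n" by simp
        have "\<epsilon>^n * \<epsilon>^(k+n) = \<epsilon>^(k + 2*n)" by (simp only: power_add[symmetric] nn)
        also have "\<dots> = \<epsilon>^k * (\<epsilon>^2)^n" by (simp only: power_add power_mult)
        finally show ?thesis using e by simp
      qed
      have yk: "y^k = fps_const (\<epsilon>^n) * fps_const (\<epsilon>^(k+n))"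
        by (simp only: y_def fps_const_power ee fps_const_mult)
      have "gb x (2*n) k * x^(tri k) * y^k * w^(2*n-k) = gb x (2*n) k * (x^(tri k) * w^(2*n-k)) * y^k"
        by (simp only: mult_ac)
      also have "\<dots> = gb x (2*n) k * (X^L * X^(ee a b n k)) * (fps_const (\<epsilon>^n) * fps_const (\<epsilon>^(k+n)))"
        by (simp only: xw yk)
      also have "\<dots> = X^L * fps_const (\<epsilon>^n) * (gb (X^a) (2*n) k * fps_const (\<epsilon>^(k+n)) * X^(ee a b n k))"
        by (simp only: x_def mult_ac)
      finally show ?thesis .
    qed
    hence "(\<Sum>k\<le>2*n. gb x (2*n) k * x^(tri k) * y^k * w^(2*n-k))
       = (\<Sum>k\<le>2*n. X^L * fps_const (\<epsilon>^n) * (gb (X^a) (2*n) k * fps_const (\<epsilon>^(k+n)) * X^(ee a b n k)))"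
      by (rule sum.cong[OF refl])
    thus ?thesis by (simp add: sum_distrib_left)
  qed
  have "(X^L * fps_const (\<epsilon>^n)) * (?D1 * ?D2) = (X^L * fps_const (\<epsilon>^n)) * ?S"
    by (simp only: lhs[symmetric] rhs[symmetric] Q)
  moreover have "(X::rat fps)^L * fps_const (\<epsilon>^n) \<noteq> 0"
  proof -
    have "\<epsilon> \<noteq> 0" using e by auto
    thus ?thesis by simp
  qed
  ultimately show ?thesis using mult_left_cancel by blast
qed

lemma jtp_term:
  assumes a: "1 \<le> a" and k: "k \<le> 2*n" and Nn: "N < n"
  shows "eqt N (X^(ee a b n k) * (gb (X^a) (2*n) k * qp (X^a) n)) (X^(ee a b n k))"
proof -
  let ?x = "(X::rat fps)^a"
  let ?G = "gb ?x (2*n) k * qp ?x n"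
  have nz: "qp ?x k * qp ?x (2*n-k) \<noteq> 0" using qp_nz[OF a] by simp
  have GL: "?G * (qp ?x k * qp ?x (2*n-k)) = qp ?x (2*n) * qp ?x n"
    using gb_qp[OF k, of ?x] by (simp add: mult_ac)
  obtain M where M: "eqt M ?G 1" "N \<le> M + ee a b n k"
  proof (cases "k \<le> n")
    case True
    have R: "qp ?x (2*n) * qp ?x n = (qr ?x k n * qr ?x (2*n-k) (2*n)) * (qp ?x k * qp ?x (2*n-k))"
      using qp_split[of k n ?x] qp_split[of "2*n-k" "2*n" ?x] True by (simp add: mult_ac)
    have "?G = qr ?x k n * qr ?x (2*n-k) (2*n)" using GL R nz by simp
    moreover have "eqt k (qr ?x k n * qr ?x (2*n-k) (2*n)) 1"
      using eqt_mult[OF qr_eqt[OF a, of k k n] qr_eqt[OF a, of k "2*n-k" "2*n"]] True by simp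
    moreover have "N \<le> k + ee a b n k" using ee_ge[OF a, where b=b and n=n and k=k] Nn True by (auto split: if_splits)
    ultimately show ?thesis using that by auto
  next
    case False
    have R: "qp ?x (2*n) * qp ?x n = (qr ?x (2*n-k) n * qr ?x k (2*n)) * (qp ?x k * qp ?x (2*n-k))"
      using qp_split[of "2*n-k" n ?x] qp_split[of k "2*n" ?x] False k by (simp add: mult_ac)
    have "?G = qr ?x (2*n-k) n * qr ?x k (2*n)" using GL R nz by simp
    moreover have "eqt (2*n-k) (qr ?x (2*n-k) n * qr ?x k (2*n)) 1"
      using eqt_mult[OF qr_eqt[OF a, of "2*n-k" "2*n-k" n] qr_eqt[OF a, of "2*n-k" k "2*n"]] False by simp
    moreover have "N \<le> (2*n-k) + ee a b n k" using ee_ge[OF a, where b=b and n=n and k=k] Nn False k by (auto split: if_splits)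
    ultimately show ?thesis using that by auto
  qed
  have "eqt (M + ee a b n k) (X^(ee a b n k) * ?G) (X^(ee a b n k) * 1)"
    by (rule eqt_shift[OF M(1)])
  thus ?thesis using M(2) eqt_mono by fastforce
qed

lemma jtp_lim:
  fixes \<epsilon> :: rat
  assumes a: "1 \<le> a" and b: "b \<le> a" and e: "\<epsilon>^2 = 1" and Nn: "N < n"
  shows "eqt N ((\<Prod>i<n. 1 + fps_const \<epsilon> * X^(a*(n-i)-b)) * (\<Prod>i<n. 1 + fps_const \<epsilon> * X^(a*i+b)) * qp (X^a) n)
                (\<Sum>k\<le>2*n. fps_const (\<epsilon>^(k+n)) * X^(ee a b n k))"
proof -
  have n: "1 \<le> n" using Nn by simp
  have "(\<Prod>i<n. 1 + fps_const \<epsilon> * X^(a*(n-i)-b)) * (\<Prod>i<n. 1 + fps_const \<epsilon> * X^(a*i+b)) * qp (X^a) n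
     = (\<Sum>k\<le>2*n. gb (X^a) (2*n) k * fps_const (\<epsilon>^(k+n)) * X^(ee a b n k)) * qp (X^a) n"
    by (simp only: jtp_fin[OF a b n e])
  also have "\<dots> = (\<Sum>k\<le>2*n. gb (X^a) (2*n) k * fps_const (\<epsilon>^(k+n)) * X^(ee a b n k) * qp (X^a) n)"
    by (rule sum_distrib_right)
  also have "\<dots> = (\<Sum>k\<le>2*n. fps_const (\<epsilon>^(k+n)) * (X^(ee a b n k) * (gb (X^a) (2*n) k * qp (X^a) n)))"
    by (rule sum.cong) (simp_all add: mult_ac)
  finally have "(\<Prod>i<n. 1 + fps_const \<epsilon> * X^(a*(n-i)-b)) * (\<Prod>i<n. 1 + fps_const \<epsilon> * X^(a*i+b)) * qp (X^a) n
     = (\<Sum>k\<le>2*n. fps_const (\<epsilon>^(k+n)) * (X^(ee a b n k) * (gb (X^a) (2*n) k * qp (X^a) n)))" .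
  moreover have "eqt N (\<Sum>k\<le>2*n. fps_const (\<epsilon>^(k+n)) * (X^(ee a b n k) * (gb (X^a) (2*n) k * qp (X^a) n)))
                 (\<Sum>k\<le>2*n. fps_const (\<epsilon>^(k+n)) * X^(ee a b n k))"
    by (intro eqt_sum eqt_mult[OF eqt_refl] jtp_term[OF a _ Nn]) auto
  ultimately show ?thesis by simp
qed

lemma inverse_unique: assumes "A * B = 1" "B $ 0 \<noteq> 0" shows "inverse B = (A :: rat fps)"
proof -
  have "inverse B = (A * B) * inverse B" using assms by simp
  also have "\<dots> = A * (B * inverse B)" by (simp add: mult.assoc)
  also have "\<dots> = A" using assms(2) by (simp add: inverse_mult_eq_1')
  finally show ?thesis .
qed

lemma qp_eqt: assumes "1 \<le> a" "N \<le> m" "m \<le> n" shows "eqt N (qp (X^a) m) (qp (X^a) n)"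
proof -
  have "qp (X^a) n = qp (X^a) m * qr (X^a) m n" using qp_split assms(3) by blast
  moreover have "eqt N (qp (X^a) m * qr (X^a) m n) (qp (X^a) m * 1)"
    by (intro eqt_mult eqt_refl qr_eqt[OF assms(1,2)])
  ultimately show ?thesis using eqt_sym by simp
qed

lemma prod_1_i: "(\<Prod>j\<in>{1..i}. f j) = (\<Prod>j<i. f (Suc j))"
  for f :: "nat \<Rightarrow> 'a::comm_monoid_mult"
  by (induct i) (simp_all add: prod.cl_ivl_Suc)

lemma f_fps_eqt: assumes "1 \<le> r" "N \<le> n" shows "eqt N (f_fps r) (qp (X^r) n)"
  unfolding eqt_def
proof (intro allI impI)
  fix i assume i: "i \<le> N"
  have "f_fps r $ i = (\<Prod>j\<in>{1..i}. 1 - X^(r*j)) $ i" by (simp add: f_fps_def)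
  also have "(\<Prod>j\<in>{1..i}. 1 - X^(r*j)) = qp (X^r) i" unfolding qp_def prod_1_i power_mult ..
  also have "qp (X^r) i $ i = qp (X^r) n $ i" using qp_eqt[OF assms(1), of i i n] i assms(2) by (simp add: eqt_def)
  finally show "f_fps r $ i = qp (X^r) n $ i" .
qed

lemma intg_Xpp[simp]: "intg N ((X^a)^m)" by (simp only: power_mult[symmetric] intg_Xp)

lemma intg_qp[simp]: "intg N (qp (X^a) n)"
  unfolding qp_def by (intro intg_prod intg_diff intg_1 intg_Xpp)

definition evn :: "rat fps \<Rightarrow> bool" where "evn A \<longleftrightarrow> (\<forall>i. odd i \<longrightarrow> A $ i = 0)"

lemma evn_1[simp]: "evn 1" by (auto simp: evn_def)
lemma evn_X2[simp]: "evn (X^(2*e))" by (auto simp: evn_def)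
lemma evn_diff: "evn A \<Longrightarrow> evn B \<Longrightarrow> evn (A - B)" by (simp add: evn_def)
lemma evn_mult: assumes "evn A" "evn B" shows "evn (A * B)"
  unfolding evn_def
proof (intro allI impI)
  fix i :: nat assume i: "odd i"
  show "(A * B) $ i = 0" unfolding fps_mult_nth
  proof (rule sum.neutral, intro ballI)
    fix t assume "t \<in> {0..i}"
    hence "odd t \<or> odd (i - t)" using i by auto
    thus "A $ t * B $ (i - t) = 0"
    proof
      assume "odd t" thus ?thesis using assms(1) by (simp add: evn_def)
    next
      assume "odd (i - t)" thus ?thesis using assms(2) by (simp add: evn_def)
    qed
  qed
qed
lemma evn_prod: "(\<And>i. i \<in> S \<Longrightarrow> evn (f i)) \<Longrightarrow> evn (prod f S)"
  by (induct S rule: infinite_finite_induct) (auto intro: evn_mult)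
lemma evn_power: "evn A \<Longrightarrow> evn (A ^ m)"
  by (induct m) (auto intro: evn_mult)
lemma evn_inverse: assumes "evn A" "A $ 0 \<noteq> 0" shows "evn (inverse A)"
  unfolding evn_def
proof (intro allI impI)
  fix i :: nat assume "odd i"
  thus "inverse A $ i = 0"
  proof (induct i rule: less_induct)
    case (less i)
    then obtain j where j: "i = Suc j" by (cases i) auto
    have "(A * inverse A) $ i = 0" using assms j by (simp add: inverse_mult_eq_1')
    hence "(\<Sum>t=0..i. A$t * inverse A $ (i - t)) = 0" by (simp add: fps_mult_nth)
    hence "A $ 0 * inverse A $ i + (\<Sum>t=Suc 0..i. A$t * inverse A $ (i - t)) = 0"
      by (simp add: sum.atLeast_Suc_atMost)
    moreover have "(\<Sum>t=Suc 0..i. A$t * inverse A $ (i - t)) = 0"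
    proof (rule sum.neutral, intro ballI)
      fix t assume t: "t \<in> {Suc 0..i}"
      show "A$t * inverse A $ (i - t) = 0"
      proof (cases "odd t")
        case True thus ?thesis using assms by (simp add: evn_def)
      next
        case False
        hence "odd (i - t)" "i - t < i" using less.prems t by auto
        thus ?thesis using less.hyps by simp
      qed
    qed
    ultimately show ?case using assms(2) by simp
  qed
qed

lemma evn_X2p: "evn ((X^2)^m)" by (simp only: power_mult[symmetric] evn_X2)

lemma evn_qp2: "evn (qp (X^2) n)"
  unfolding qp_def by (intro evn_prod evn_diff evn_1 evn_X2p)

definition oddp :: "rat fps \<Rightarrow> rat fps" where
  "oddp A = Abs_fps (\<lambda>i. if odd i then A $ i else 0)"

lemma oddp_coeff: assumes "odd j" "evn B" shows "(A * B) $ j = (oddp A * B) $ j"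
proof -
  have "evn (A - oddp A)" by (simp add: evn_def oddp_def)
  hence "evn ((A - oddp A) * B)" using assms(2) by (rule evn_mult)
  hence "((A - oddp A) * B) $ j = 0" using assms(1) by (simp add: evn_def)
  thus ?thesis by (simp add: algebra_simps)
qed

lemma tri_int: "2 * int (tri s) = int s * (int s - 1)"
proof -
  have "int (2 * tri s) = int (s * (s - 1))" by (simp only: tri2)
  thus ?thesis by (cases s) (auto simp: algebra_simps)
qed

lemma ee_int: assumes "b \<le> a"
  shows "2 * int (ee a b n k) = int a * (int k - int n) * (int k - int n - 1) + 2 * int b * (int k - int n)"
proof (cases "n \<le> k")
  case True
  define s where "s = k - n"
  have m: "int k - int n = int s" using True s_def by simp
  have e: "ee a b n k = a * tri s + b * s" using True by (simp add: ee_def s_def)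
  have "2 * int (ee a b n k) = int a * (2 * int (tri s)) + 2 * int b * int s"
    unfolding e by (simp add: algebra_simps)
  thus ?thesis unfolding m tri_int by (simp add: algebra_simps)
next
  case False
  define s where "s = n - k"
  have m: "int k - int n = - int s" using False s_def by simp
  have e: "ee a b n k = a * tri s + (a - b) * s" using False by (simp add: ee_def s_def)
  have ab: "int ((a-b)*s) = (int a - int b) * int s" by (simp only: of_nat_mult of_nat_diff[OF assms])
  have "2 * int (ee a b n k) = 2 * (int a * int (tri s)) + 2 * int ((a-b)*s)"
    unfolding e by (simp only: of_nat_add of_nat_mult distrib_left)
  hence "2 * int (ee a b n k) = int a * (2 * int (tri s)) + 2 * (int a - int b) * int s"
    unfolding ab by (simp add: algebra_simps)
  thus ?thesis unfolding m tri_int by (simp add: algebra_simps)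
qed

lemma eeG: "int (ee 2 1 n k) = (int k - int n)^2"
  using ee_int[of 1 2 n k] by (simp add: power2_eq_square algebra_simps)
lemma ee8: "int (ee 8 0 n k) = 4 * (int k - int n) * (int k - int n - 1)"
  using ee_int[of 0 8 n k] by (simp add: algebra_simps)
lemma eeE: "int (ee 48 16 n k) = 8 * (int k - int n) * (3 * (int k - int n) - 1)"
  using ee_int[of 16 48 n k] by (simp add: algebra_simps)

definition th :: "rat \<Rightarrow> nat \<Rightarrow> nat \<Rightarrow> nat \<Rightarrow> rat fps" where
  "th \<epsilon> a b n = (\<Sum>k\<le>2*n. fps_const (\<epsilon>^(k+n)) * X^(ee a b n k))"

lemma th_nth: "th \<epsilon> a b n $ j = (\<Sum>k\<in>{k\<in>{..2*n}. ee a b n k = j}. \<epsilon>^(k+n))"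
proof -
  have "th \<epsilon> a b n $ j = (\<Sum>k\<le>2*n. if ee a b n k = j then \<epsilon>^(k+n) else 0)"
    unfolding th_def fps_sum_nth by (intro sum.cong) auto
  also have "\<dots> = (\<Sum>k\<in>{k\<in>{..2*n}. ee a b n k = j}. \<epsilon>^(k+n))"
    by (rule sum.inter_filter[symmetric]) simp
  finally show ?thesis .
qed

definition Od :: "nat \<Rightarrow> rat fps" where "Od n = (\<Prod>i<n. 1 - X^(2*i+1))"
definition Rr :: "nat \<Rightarrow> rat fps" where "Rr n = (\<Prod>i<n. 1 + X^(8 * Suc i))"

lemma gauss: assumes "N < n" shows "eqt N (Od n * Od n * qp (X^2) n) (th (-1) 2 1 n)"
proof -
  have "(\<Prod>i<n. 1 + fps_const (-1) * X^(2*(n-i)-1)) = (\<Prod>i<n. 1 + fps_const (-1) * X^(2*(Suc i)-1))"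
    using prod_reflect[of "\<lambda>j. 1 + fps_const (-1) * X^(2*j-1)" n] by simp
  also have "\<dots> = Od n" unfolding Od_def by (intro prod.cong) (simp_all add: fps_const_neg[symmetric])
  finally have D1: "(\<Prod>i<n. 1 + fps_const (-1) * X^(2*(n-i)-1)) = Od n" .
  have D2: "(\<Prod>i<n. 1 + fps_const (-1) * X^(2*i+1)) = Od n"
    unfolding Od_def by (intro prod.cong) (simp_all add: fps_const_neg[symmetric])
  show ?thesis using jtp_lim[of 2 1 "-1" N n] assms D1 D2 by (simp add: th_def)
qed

lemma qp1_split: "qp X (2*n) = Od n * qp (X^2) n"
proof (induct n)
  case 0 thus ?case by (simp add: Od_def)
next
  case (Suc n)
  have t: "2 * Suc n = Suc (Suc (2*n))" by simp
  have e: "(X^2)^(Suc n) = (X::rat fps)^(Suc (Suc (2*n)))" by (simp only: power_mult[symmetric] t)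
  have e2: "Suc (2*n) = 2*n+1" by simp
  have "qp X (2 * Suc n) = qp X (2*n) * (1 - X^(Suc (2*n))) * (1 - X^(Suc (Suc (2*n))))"
    by (simp only: t qp_Suc)
  also have "\<dots> = (Od n * (1 - X^(2*n+1))) * (qp (X^2) n * (1 - (X^2)^(Suc n)))"
    unfolding Suc e e2 by (simp only: mult_ac)
  also have "Od n * (1 - X^(2*n+1)) = Od (Suc n)" by (simp only: Od_def prod.lessThan_Suc)
  also have "qp (X^2) n * (1 - (X^2)^(Suc n)) = qp (X^2) (Suc n)" by (simp only: qp_Suc)
  finally show ?case .
qed

lemma t8: assumes "N < n" shows "eqt N (Rr n * (2 * Rr (n-1)) * qp (X^8) n) (th 1 8 0 n)"
proof -
  obtain n' where n': "n = Suc n'" using assms by (cases n) auto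
  have "(\<Prod>i<n. 1 + fps_const 1 * X^(8*(n-i)-0)) = (\<Prod>i<n. 1 + fps_const 1 * X^(8*(Suc i)-0))"
    using prod_reflect[of "\<lambda>j. 1 + fps_const 1 * X^(8*j-0)" n] by simp
  hence D1: "(\<Prod>i<n. 1 + fps_const 1 * X^(8*(n-i)-0)) = Rr n" by (simp add: Rr_def)
  have D2: "(\<Prod>i<n. 1 + fps_const 1 * X^(8*i+0)) = 2 * Rr (n-1)"
    unfolding n' by (subst prod.lessThan_Suc_shift) (simp add: Rr_def)
  show ?thesis using jtp_lim[of 8 0 1 N n] assms D1 D2 by (simp add: th_def)
qed

lemma Rr_eqt: assumes "N < 8 * Suc m" shows "eqt N (Rr m) (Rr (Suc m))"
proof -
  have "Rr (Suc m) = Rr m * (1 + X^(8 * Suc m))" by (simp add: Rr_def)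
  moreover have "eqt N (Rr m * (1 + X^(8 * Suc m))) (Rr m * 1)"
    by (intro eqt_mult eqt_refl eqt_one_plus) (use assms in auto)
  ultimately show ?thesis using eqt_sym by simp
qed

lemma q16: "qp (X^16) (3*n) = (\<Prod>i<n. 1 - X^(48 * Suc i - 16)) * (\<Prod>i<n. 1 - X^(48*i+16)) * qp (X^48) n"
proof (induct n)
  case 0 thus ?case by simp
next
  case (Suc n)
  have a1: "16 * Suc (3*n) = 48*n+16" by simp
  have a2: "16 * Suc (Suc (3*n)) = 48 * Suc n - 16" by simp
  have a3: "16 * Suc (Suc (Suc (3*n))) = 48 * Suc n" by simp
  have e1: "((X::rat fps)^16)^(Suc (3*n)) = X^(48*n+16)" by (simp only: power_mult[symmetric] a1)
  have e2: "((X::rat fps)^16)^(Suc (Suc (3*n))) = X^(48 * Suc n - 16)" by (simp only: power_mult[symmetric] a2)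
  have e3: "((X::rat fps)^16)^(Suc (Suc (Suc (3*n)))) = (X^48)^(Suc n)" by (simp only: power_mult[symmetric] a3)
  have t: "3 * Suc n = Suc (Suc (Suc (3*n)))" by simp
  have "qp (X^16) (3 * Suc n) = qp (X^16) (3*n) * (1 - (X^16)^(Suc (3*n))) * (1 - (X^16)^(Suc (Suc (3*n))))
           * (1 - (X^16)^(Suc (Suc (Suc (3*n)))))"
    by (simp only: t qp_Suc)
  also have "\<dots> = ((\<Prod>i<n. 1 - X^(48 * Suc i - 16)) * (1 - X^(48 * Suc n - 16)))
     * ((\<Prod>i<n. 1 - X^(48*i+16)) * (1 - X^(48*n+16))) * (qp (X^48) n * (1 - (X^48)^(Suc n)))"
    unfolding e1 e2 e3 Suc by (simp only: mult_ac)
  finally show ?case by (simp only: qp_Suc prod.lessThan_Suc)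
qed

lemma euler: assumes "N < n" shows "eqt N (qp (X^16) (3*n)) (th (-1) 48 16 n)"
proof -
  have "(\<Prod>i<n. 1 + fps_const (-1) * X^(48*(n-i)-16)) = (\<Prod>i<n. 1 + fps_const (-1) * X^(48*(Suc i)-16))"
    using prod_reflect[of "\<lambda>j. 1 + fps_const (-1) * X^(48*j-16)" n] by simp
  also have "\<dots> = (\<Prod>i<n. 1 - X^(48 * Suc i - 16))" by (intro prod.cong) (simp_all add: fps_const_neg[symmetric])
  finally have D1: "(\<Prod>i<n. 1 + fps_const (-1) * X^(48*(n-i)-16)) = (\<Prod>i<n. 1 - X^(48 * Suc i - 16))" .
  have D2: "(\<Prod>i<n. 1 + fps_const (-1) * X^(48*i+16)) = (\<Prod>i<n. 1 - X^(48*i+16))"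
    by (intro prod.cong) (simp_all add: fps_const_neg[symmetric])
  show ?thesis using jtp_lim[of 48 16 "-1" N n] assms D1 D2 q16[of n] by (simp add: th_def)
qed

lemma abs_le_sq: fixes m :: int shows "\<bar>m\<bar> \<le> m^2"
proof (cases "m = 0")
  case False hence "1 \<le> \<bar>m\<bar>" by simp
  hence "\<bar>m\<bar> * 1 \<le> \<bar>m\<bar> * \<bar>m\<bar>" by (intro mult_left_mono) auto
  thus ?thesis by (simp add: power2_eq_square abs_mult_self_eq)
qed simp

lemma card_S1_S2:
  assumes j: "odd j" "j < n"
  shows "card {k\<in>{..2*n}. ee 2 1 n k = j} = card {k\<in>{..2*n}. ee 8 0 n k = j - 1}"
proof -
  let ?S1 = "{k\<in>{..2*n}. ee 2 1 n k = j}" and ?S2 = "{k\<in>{..2*n}. ee 8 0 n k = j - 1}"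
  define f where "f k = nat (int n + (int k - int n + 1) div 2)" for k
  define g where "g k = nat (int n + 2 * (int k - int n) - 1)" for k
  have j1: "1 \<le> j" using j by (cases j) auto
  have S1: "k \<in> ?S1 \<longleftrightarrow> k \<le> 2*n \<and> (int k - int n)^2 = int j" for k
    using eeG[of n k] by auto
  have S2: "k \<in> ?S2 \<longleftrightarrow> k \<le> 2*n \<and> 4 * (int k - int n) * (int k - int n - 1) = int j - 1" for k
    using ee8[of n k] j1 by (auto simp: of_nat_diff)
  have A: "f k \<in> ?S2 \<and> g (f k) = k" if "k \<in> ?S1" for k
  proof -
    define m where "m = int k - int n"
    have m2: "m^2 = int j" "k \<le> 2*n" using that S1 m_def by auto
    have "odd (m^2)" using m2 j by simp
    hence om: "odd m" by simp
    then obtain t where t: "m = 2 * t + 1" by (rule oddE)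
    define m' where "m' = t + 1"
    have m': "m = 2 * m' - 1" using t m'_def by simp
    have hm: "(m + 1) div 2 = m'" using m' by simp
    have "\<bar>m\<bar> \<le> int j" using abs_le_sq[of m] m2 by simp
    hence bm: "\<bar>m\<bar> < int n" using j by simp
    have fk: "int (f k) = int n + m'" unfolding f_def m_def[symmetric] hm using bm m' by simp
    have "f k \<le> 2*n" using fk bm m' by simp
    moreover have "4 * (int (f k) - int n) * (int (f k) - int n - 1) = int j - 1"
      using fk m2(1) m' by (simp add: power2_eq_square algebra_simps)
    moreover have "g (f k) = k" unfolding g_def fk using m' m_def by simp
    ultimately show ?thesis using S2 by blast
  qed
  have B: "g k \<in> ?S1 \<and> f (g k) = k" if "k \<in> ?S2" for k
  proof -
    define m' where "m' = int k - int n"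
    have e: "4 * m' * (m' - 1) = int j - 1" "k \<le> 2*n" using that S2 m'_def by auto
    define m where "m = 2 * m' - 1"
    have m2: "m^2 = int j" using e(1) by (simp add: m_def power2_eq_square algebra_simps)
    have "\<bar>m\<bar> \<le> int j" using abs_le_sq[of m] m2 by simp
    hence bm: "\<bar>m\<bar> < int n" using j by simp
    have gk: "int (g k) = int n + m" unfolding g_def m'_def[symmetric] m_def using bm m_def by simp
    have "g k \<le> 2*n" using gk bm by simp
    moreover have "(int (g k) - int n)^2 = int j" using gk m2 by simp
    moreover have "f (g k) = k" unfolding f_def gk m_def using m'_def by simp
    ultimately show ?thesis using S1 by blast
  qed
  have "bij_betw f ?S1 ?S2"
    by (rule bij_betw_byWitness[where f'=g]) (use A B in blast)+
  thus ?thesis by (rule bij_betw_same_card)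
qed

lemma thG_odd:
  assumes j: "odd j" "j < n"
  shows "th (-1) 2 1 n $ j = - (th 1 8 0 n $ (j - 1))"
proof -
  have "th (-1) 2 1 n $ j = (\<Sum>k\<in>{k\<in>{..2*n}. ee 2 1 n k = j}. (-1::rat))"
    unfolding th_nth
  proof (rule sum.cong[OF refl])
    fix k assume "k \<in> {k\<in>{..2*n}. ee 2 1 n k = j}"
    hence "(int k - int n)^2 = int j" using eeG[of n k] by auto
    hence "odd ((int k - int n)^2)" using j by simp
    hence "odd (int k - int n)" by simp
    hence "odd (int k - int n + 2 * int n)" by simp
    hence "odd (int (k + n))" by (simp add: algebra_simps)
    hence "odd (k + n)" by simp
    thus "(-1::rat)^(k+n) = -1" by simp
  qed
  also have "\<dots> = - of_nat (card {k\<in>{..2*n}. ee 2 1 n k = j})" by simp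
  also have "\<dots> = - of_nat (card {k\<in>{..2*n}. ee 8 0 n k = j - 1})" using card_S1_S2[OF j] by simp
  also have "\<dots> = - (th 1 8 0 n $ (j - 1))" unfolding th_nth by simp
  finally show ?thesis .
qed

lemma th8_odd: assumes "odd i" shows "th 1 8 0 n $ i = 0"
proof -
  have "{k\<in>{..2*n}. ee 8 0 n k = i} = {}"
  proof (rule ccontr)
    assume "{k\<in>{..2*n}. ee 8 0 n k = i} \<noteq> {}"
    then obtain k where "ee 8 0 n k = i" by auto
    hence "int i = 2 * (2 * (int k - int n) * (int k - int n - 1))" using ee8[of n k] by simp
    hence "even (int i)" by (metis dvd_triv_left)
    thus False using assms by simp
  qed
  thus ?thesis unfolding th_nth by (simp only: sum.empty)
qed

lemma oddpG: assumes "N < n"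
  shows "eqt N (oddp (th (-1) 2 1 n)) (- (X * th 1 8 0 n))"
  unfolding eqt_def
proof (intro allI impI)
  fix j assume jN: "j \<le> N"
  show "oddp (th (-1) 2 1 n) $ j = (- (X * th 1 8 0 n)) $ j"
  proof (cases "odd j")
    case True
    hence "j \<noteq> 0" by (cases j) auto
    thus ?thesis using thG_odd[OF True] jN assms True by (simp add: oddp_def)
  next
    case False
    show ?thesis
    proof (cases "j = 0")
      case True thus ?thesis by (simp add: oddp_def)
    next
      case j0: False
      hence "odd (j - 1)" using False by simp
      thus ?thesis using th8_odd[of "j - 1" n] False j0 by (simp add: oddp_def)
    qed
  qed
qed

lemma thE_zero:
  assumes "\<forall>m::int. 8 * m * (3 * m - 1) \<noteq> int i"
  shows "th (-1) 48 16 n $ i = 0"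
proof -
  have "{k\<in>{..2*n}. ee 48 16 n k = i} = {}"
  proof (rule ccontr)
    assume "{k\<in>{..2*n}. ee 48 16 n k = i} \<noteq> {}"
    then obtain k where "ee 48 16 n k = i" by auto
    hence "8 * (int k - int n) * (3 * (int k - int n) - 1) = int i" using eeE[of n k] by simp
    thus False using assms by blast
  qed
  thus ?thesis unfolding th_nth by (simp only: sum.empty)
qed

lemma id4: "(1 - y)^4 = (1 - y^2)^2 + 4 * (- y + 2*y^2 - y^3)" for y :: "'a::comm_ring_1"
  by (simp add: power2_eq_square power3_eq_cube power4_eq_xxxx algebra_simps)
lemma id2a: "(1 + y)^2 = (1 - y^2) + 2 * (y + y^2)" for y :: "'a::comm_ring_1"
  by (simp add: power2_eq_square algebra_simps)
lemma id2b: "(1 - y)^4 = (1 - y^4) + 2 * (- 2*y + 3*y^2 - 2*y^3 + y^4)" for y :: "'a::comm_ring_1"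
  by (simp add: power2_eq_square power3_eq_cube power4_eq_xxxx algebra_simps)

lemma c4: "fps_const (of_int 4) = (4::rat fps)" by (simp add: numeral_fps_const)
lemma c2: "fps_const (of_int 2) = (2::rat fps)" by (simp add: numeral_fps_const)

lemma pow_swap: "(x^a)^b = (x^b)^a" for x :: "'a::monoid_mult"
  by (simp only: power_mult[symmetric] mult.commute)

lemma intg_qpX[simp]: "intg N (qp X n)" using intg_qp[of N 1 n] by simp
lemma qpX0: "qp X n $ 0 = 1" using qp0[of 1 n] by simp

lemma cg4_fac: "cg N 4 ((qp X n)^4) ((qp (X^2) n)^2)"
proof -
  have a: "(qp X n)^4 = (\<Prod>i<n. (1 - X^(Suc i))^4)" by (simp add: qp_def prod_power_distrib)
  have b: "(qp (X^2) n)^2 = (\<Prod>i<n. (1 - (X^(Suc i))^2)^2)"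
    unfolding qp_def prod_power_distrib pow_swap[of X 2] ..
  have "cg N 4 (\<Prod>i<n. (1 - X^(Suc i))^4) (\<Prod>i<n. (1 - (X^(Suc i))^2)^2)"
  proof (rule cg_prod, intro conjI)
    fix i
    show "cg N 4 ((1 - X^(Suc i))^4) ((1 - (X^(Suc i))^2)^2)"
      by (rule cg_decomp[where C="- (X^(Suc i)) + 2*(X^(Suc i))^2 - (X^(Suc i))^3"])
         (simp_all only: c4 id4 intg_diff intg_add intg_uminus intg_mult intg_numeral intg_Xp intg_power)
  qed (intro intg_power intg_diff intg_1 intg_Xp)+
  thus ?thesis using a b by simp
qed

lemma cg2_R: "cg N 2 ((Rr n)^2) (qp (X^16) n)"
proof -
  have a: "(Rr n)^2 = (\<Prod>i<n. (1 + X^(8 * Suc i))^2)" by (simp add: Rr_def prod_power_distrib)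
  have e: "((X::rat fps)^16)^(Suc i) = (X^(8 * Suc i))^2" for i
    by (simp only: power_mult[symmetric] mult_ac) simp
  have b: "qp (X^16) n = (\<Prod>i<n. 1 - (X^(8 * Suc i))^2)"
    unfolding qp_def e ..
  have "cg N 2 (\<Prod>i<n. (1 + X^(8 * Suc i))^2) (\<Prod>i<n. 1 - (X^(8 * Suc i))^2)"
  proof (rule cg_prod, intro conjI)
    fix i
    show "cg N 2 ((1 + X^(8 * Suc i))^2) (1 - (X^(8 * Suc i))^2)"
      by (rule cg_decomp[where C="X^(8 * Suc i) + (X^(8 * Suc i))^2"])
         (simp_all only: c2 id2a intg_diff intg_add intg_uminus intg_mult intg_numeral intg_Xp intg_power)
  qed (intro intg_power intg_diff intg_add intg_1 intg_Xp)+
  thus ?thesis using a b by simp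
qed

lemma cg2_P8: "cg N 2 (qp (X^8) n) ((qp (X^2) n)^4)"
proof -
  have e: "((X::rat fps)^8)^(Suc i) = ((X^2)^(Suc i))^4" for i
    by (simp only: power_mult[symmetric] mult_ac) simp
  have a: "qp (X^8) n = (\<Prod>i<n. 1 - ((X^2)^(Suc i))^4)" unfolding qp_def e ..
  have b: "(qp (X^2) n)^4 = (\<Prod>i<n. (1 - (X^2)^(Suc i))^4)" by (simp add: qp_def prod_power_distrib)
  have "cg N 2 (\<Prod>i<n. (1 - (X^2)^(Suc i))^4) (\<Prod>i<n. 1 - ((X^2)^(Suc i))^4)"
  proof (rule cg_prod, intro conjI)
    fix i
    let ?y = "((X::rat fps)^2)^(Suc i)"
    show "cg N 2 ((1 - ?y)^4) (1 - ?y^4)"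
      by (rule cg_decomp[where C="- 2*?y + 3*?y^2 - 2*?y^3 + ?y^4"])
         (simp_all only: c2 id2b intg_diff intg_add intg_uminus intg_mult intg_numeral intg_Xpp intg_power)
  qed (intro intg_power intg_diff intg_1 intg_Xpp)+
  thus ?thesis using a b by (simp add: cg_sym)
qed

lemma main:
  assumes N: "N = 2*M + 1" and nr: "\<forall>m::int. 4*m*(3*m-1) \<noteq> int M"
  shows "\<exists>z::int. d 7 N = 4 * of_int z"
proof -
  define n where "n = N + 1"
  have Nn: "N < n" by (simp add: n_def)
  define P1 where "P1 = qp X n"
  define P2 where "P2 = qp (X^2) n"
  define P8 where "P8 = qp (X^8) n"
  define P16 where "P16 = qp (X^16) n"
  define U where "U = inverse P1"
  define V where "V = inverse P2"
  have P1_0: "P1 $ 0 = 1" by (simp add: P1_def qpX0)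
  have P2_0: "P2 $ 0 = 1" unfolding P2_def by (rule qp0) simp
  have iP1: "intg N P1" and iP2: "intg N P2" and iP8: "intg N P8" and iP16: "intg N P16"
    by (simp_all add: P1_def P2_def P8_def P16_def)
  have iU: "intg N U" unfolding U_def by (rule intg_inverse[OF iP1 P1_0])
  have iV: "intg N V" unfolding V_def by (rule intg_inverse[OF iP2 P2_0])
  have UP: "U * P1 = 1" unfolding U_def using P1_0 by (simp add: inverse_mult_eq_1)
  have VP: "V * P2 = 1" unfolding V_def using P2_0 by (simp add: inverse_mult_eq_1)

  have dA: "d 7 N = (P2^7 * U^22) $ N"
  proof -
    have e1: "eqt N (f_fps 2) P2" using f_fps_eqt[of 2 N n] Nn by (simp add: P2_def)
    have e2: "eqt N (f_fps 1) P1" using f_fps_eqt[of 1 N n] Nn by (simp add: P1_def)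
    have f10: "f_fps 1 $ 0 = 1" using e2 P1_0 by (simp add: eqt_def)
    have "eqt N (inverse (f_fps 1 ^ 22)) (inverse (P1 ^ 22))"
      by (rule eqt_inverse[OF eqt_power[OF e2]]) (use f10 in \<open>simp add: fps_nth_power_0\<close>)
    moreover have "inverse (P1^22) = U^22"
    proof (rule inverse_unique)
      show "U^22 * P1^22 = 1" by (simp add: power_mult_distrib[symmetric] UP)
      show "P1^22 $ 0 \<noteq> 0" by (simp add: fps_nth_power_0 P1_0)
    qed
    ultimately have "eqt N (f_fps 2 ^ 7 * inverse (f_fps 1 ^ 22)) (P2^7 * U^22)"
      using eqt_mult[OF eqt_power[OF e1]] by simp
    thus ?thesis by (simp add: d_def eqt_def)
  qed

  have cB: "cg N 4 (P2^7 * U^22) (P1^2 * V^5)"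
  proof -
    have f4: "cg N 4 (P1^4) (P2^2)" unfolding P1_def P2_def by (rule cg4_fac)
    have "cg N 4 ((U^4 * V^2) * P1^4) ((U^4 * V^2) * P2^2)"
      by (rule cg_lmult[OF f4]) (intro intg_mult intg_power iU iV)
    moreover have "(U^4 * V^2) * P1^4 = V^2"
    proof -
      have "(U^4 * V^2) * P1^4 = (U * P1)^4 * V^2" by (simp only: power_mult_distrib mult_ac)
      thus ?thesis using UP by simp
    qed
    moreover have "(U^4 * V^2) * P2^2 = U^4"
    proof -
      have "(U^4 * V^2) * P2^2 = (V * P2)^2 * U^4" by (simp only: power_mult_distrib mult_ac)
      thus ?thesis using VP by simp
    qed
    ultimately have "cg N 4 (V^2) (U^4)" by simp
    hence "cg N 4 ((V^2)^6) ((U^4)^6)" by (rule cg_power) (intro intg_power iU iV)+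
    hence c12: "cg N 4 (V^12) (U^24)" by (simp add: power_mult[symmetric])
    have "cg N 4 ((P2^7 * P1^2) * U^24) ((P2^7*P1^2) * V^12)"
      by (rule cg_lmult[OF cg_sym[OF c12]]) (intro intg_mult intg_power iP1 iP2)
    moreover have "(P2^7 * P1^2) * U^24 = P2^7 * U^22"
    proof -
      have u: "U^24 = U^22 * U^2" by (simp flip: power_add)
      have "(P2^7 * P1^2) * U^24 = P2^7 * U^22 * (U * P1)^2" by (simp only: u power_mult_distrib mult_ac)
      thus ?thesis using UP by simp
    qed
    moreover have "(P2^7 * P1^2) * V^12 = P1^2 * V^5"
    proof -
      have v: "V^12 = V^5 * V^7" by (simp flip: power_add)
      have "(P2^7 * P1^2) * V^12 = P1^2 * V^5 * (V * P2)^7" by (simp only: v power_mult_distrib mult_ac)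
      thus ?thesis using VP by simp
    qed
    ultimately show ?thesis by simp
  qed

  have cC: "eqt N (P1^2 * V^5) (th (-1) 2 1 n * V^4)"
  proof -
    have "eqt N P1 (qp X (2*n))" using qp_eqt[of 1 N n "2*n"] Nn by (simp add: P1_def)
    hence "eqt N (P1^2 * V^5) ((Od n * P2)^2 * V^5)"
      by (simp add: qp1_split P2_def eqt_mult eqt_power)
    moreover have "(Od n * P2)^2 * V^5 = (Od n * Od n * P2) * V^4"
    proof -
      have "(Od n * P2)^2 * V^5 = (Od n * Od n * P2) * V^4 * (V * P2)"
        by (simp add: eval_nat_numeral mult_ac)
      thus ?thesis using VP by simp
    qed
    moreover have "eqt N ((Od n * Od n * P2) * V^4) (th (-1) 2 1 n * V^4)"
      by (rule eqt_mult[OF _ eqt_refl]) (use gauss[OF Nn] in \<open>simp add: P2_def\<close>)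
    ultimately show ?thesis using eqt_trans by simp
  qed

  define W where "W = Rr n ^ 2 * P8 * V^4"
  have evV4: "evn (V^4)" unfolding V_def using P2_0 by (intro evn_power evn_inverse) (simp_all add: P2_def evn_qp2)
  have oddN: "odd N" using N by simp
  have cD: "(P1^2 * V^5) $ N = - ((X * (fps_const 2 * W)) $ N)"
  proof -
    have "(P1^2 * V^5) $ N = (th (-1) 2 1 n * V^4) $ N" using cC by (simp add: eqt_def)
    also have "\<dots> = (oddp (th (-1) 2 1 n) * V^4) $ N" by (rule oddp_coeff[OF oddN evV4])
    also have "\<dots> = (- (X * th 1 8 0 n) * V^4) $ N"
      using eqt_mult[OF oddpG[OF Nn] eqt_refl[of N "V^4"]] by (simp add: eqt_def)
    also have "\<dots> = (- (X * (Rr n * (2 * Rr n) * P8)) * V^4) $ N"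
    proof -
      have n1: "Suc (n - 1) = n" using Nn by simp
      have "eqt N (Rr (n-1)) (Rr n)" using Rr_eqt[of N "n-1"] n1 Nn by simp
      hence "eqt N (Rr n * (2 * Rr (n-1)) * P8) (Rr n * (2 * Rr n) * P8)"
        by (intro eqt_mult eqt_refl)
      hence "eqt N (th 1 8 0 n) (Rr n * (2 * Rr n) * P8)"
        using t8[OF Nn] eqt_sym eqt_trans unfolding P8_def by blast
      hence "eqt N (- (X * th 1 8 0 n) * V^4) (- (X * (Rr n * (2 * Rr n) * P8)) * V^4)"
        by (intro eqt_mult eqt_uminus eqt_refl)
      thus ?thesis by (simp add: eqt_def)
    qed
    also have "- (X * (Rr n * (2 * Rr n) * P8)) * V^4 = - (X * (fps_const 2 * W))"
      by (simp add: W_def power2_eq_square numeral_fps_const mult_ac)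
    finally show ?thesis by simp
  qed

  have cF: "cg N 4 (X * (fps_const 2 * W)) (X * (fps_const 2 * P16))"
  proof -
    have a: "cg N 2 (Rr n ^ 2) P16" unfolding P16_def by (rule cg2_R)
    have b: "cg N 2 P8 (P2^4)" unfolding P8_def P2_def by (rule cg2_P8)
    have iRr: "intg N (Rr n)" unfolding Rr_def by (intro intg_prod intg_add intg_1 intg_Xp)
    have "cg N 2 (P8 * V^4) (P2^4 * V^4)"
      by (rule cg_mult[OF b cg_refl]) (intro iP8 intg_power iV)+
    moreover have "P2^4 * V^4 = 1" by (simp add: power_mult_distrib[symmetric] VP[unfolded mult.commute[of V P2]])
    ultimately have "cg N 2 (P8 * V^4) 1" by simp
    hence "cg N 2 (Rr n ^ 2 * (P8 * V^4)) (P16 * 1)"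
      by (rule cg_mult[OF a]) (intro intg_power iRr intg_1)+
    hence "cg N 2 W P16" by (simp add: W_def mult.assoc)
    hence "cg N (2 * 2) (fps_const (of_int 2) * W) (fps_const (of_int 2) * P16)" by (rule cg_scale)
    hence "cg N 4 (fps_const 2 * W) (fps_const 2 * P16)" by simp
    thus ?thesis by (rule cg_lmult) simp
  qed

  have cG: "(X * (fps_const 2 * P16)) $ N = 0"
  proof -
    have "P16 $ (2*M) = qp (X^16) (3*n) $ (2*M)"
      using qp_eqt[of 16 N n "3*n"] Nn N unfolding P16_def eqt_def by simp
    also have "\<dots> = th (-1) 48 16 n $ (2*M)" using euler[OF Nn] N unfolding eqt_def by simp
    also have "\<dots> = 0"
    proof (rule thE_zero, intro allI notI)
      fix m :: int assume "8 * m * (3 * m - 1) = int (2*M)"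
      hence "4 * m * (3 * m - 1) = int M" by simp
      thus False using nr by blast
    qed
    finally show ?thesis using N by simp
  qed

  obtain w1 where w1: "w1 \<in> \<int>" "(P2^7 * U^22) $ N = (P1^2 * V^5) $ N + of_int 4 * w1"
    using cg_nth[OF cB] by auto
  obtain w2 where w2: "w2 \<in> \<int>" "(X * (fps_const 2 * W)) $ N = (X * (fps_const 2 * P16)) $ N + of_int 4 * w2"
    using cg_nth[OF cF] by auto
  have "d 7 N = 4 * (w1 - w2)" using dA w1(2) w2(2) cD cG by (simp add: algebra_simps)
  moreover obtain z where "w1 - w2 = of_int z" using w1(1) w2(1) by (metis Ints_diff Ints_cases)
  ultimately show ?thesis by auto
qed

lemma nonres:
  fixes p r n :: nat
  assumes "Legendre (int (3*r+1)) (int p) = -1"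
  shows "\<forall>m::int. 4*m*(3*m-1) \<noteq> int (p*n + r)"
proof (intro allI notI)
  fix m :: int assume h: "4*m*(3*m-1) = int (p*n + r)"
  have "(6*m-1)^2 = 3*(4*m*(3*m-1)) + 1" by (simp add: power2_eq_square algebra_simps)
  also have "\<dots> = int (3*r+1) + int p * (3 * int n)" unfolding h by (simp add: algebra_simps)
  finally have "[(6*m-1)^2 = int (3*r+1)] (mod int p)" by (simp add: cong_def)
  hence "QuadRes (int p) (int (3*r+1))" unfolding QuadRes_def by blast
  thus False using assms unfolding Legendre_def by (auto split: if_splits)
qed

theorem theorem3p5:
  fixes p :: nat and r :: nat
  assumes "prime p" and "p \<ge> 5"
    and "1 \<le> r" and "r \<le> p - 1"
    and "Legendre (int (3 * r + 1)) (int p) = -1"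
  shows "\<forall>n::nat. \<exists>z::int. d 7 (2 * p * n + 2 * r + 1) = 4 * of_int z"
proof
  fix n :: nat
  have "2 * p * n + 2 * r + 1 = 2 * (p*n + r) + 1" by simp
  moreover have "\<forall>m::int. 4*m*(3*m-1) \<noteq> int (p*n + r)" using nonres[OF assms(5)] by blast
  ultimately show "\<exists>z::int. d 7 (2 * p * n + 2 * r + 1) = 4 * of_int z" using main by metis
qed

end
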